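(* Let $n\geq 2$ and $t$ be positive integers. (i) If $t$ is odd, then any two distinct vertices of $D_{n,t}$ are at distance at least $3$ in $S(K_n,t)$. (ii) If $t$ is even, then any two distinct vertices of $D^*_{n,t}=D_{n,t}\setminus\{1^t\}$ are at distance at least $3$ in $S(K_n,t)$.
   Context: For a positive integer $n$ let $[n]=\{1,\dots,n\}$. For positive integers $n,t$, the Sierpiński graph $S(K_n,t)$ is the simple graph with vertex set $[n]^t$ (words $v_1v_2\cdots v_t$ with $v_i\in[n]$), in which $u_1\cdots u_t$ and $v_1\cdots v_t$ are adjacent if and only if there is $s\in[t]$ with $u_j=v_j$ for all $j<s$, $u_s\neq v_s$, and $u_j=v_s$ and $v_j=u_s$ for all $j>s$. Distance is the length of a shortest path. Write $a^k$ for the word consisting of $k$ copies of the letter $a$. The sets $D_{n,t}\subseteq[n]^t$ are defined recursively: $D_{n,1}=\{1\}$, $D_{n,2}=\{11,21,\dots,n1\}$. For $t\geq 3$ and $\mathbf v=v_1\cdots v_{t-2}\in D_{n,t-2}$ put $E_1(\mathbf v)=\{v_1\cdots v_{t-2}\alpha\alpha:\alpha\in[n]\}$, $E_2(\mathbf v)=\{v_1\cdots v_{t-3}\alpha\beta v_{t-2}:\alpha,\beta\in[n]\setminus\{v_{t-2}\}\}$, and, if $\mathbf v$ is not a constant word, let $\ell$ be the largest index in $[t-3]$ with $v_\ell\neq v_{\ell+1}$ and put $E_3(\mathbf v)=\{v_1\cdots v_{\ell-1}v_{\ell+1}v_\ell^{\,t-\ell-2}\alpha v_\ell:\alpha\in[n]\setminus\{v_\ell\}\}$.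 If $t\geq 3$ is odd, $D_{n,t}=E_1(1^{t-2})\cup E_2(1^{t-2})\cup\bigcup_{\mathbf v\in D_{n,t-2}\setminus\{1^{t-2}\}}\big(E_1(\mathbf v)\cup E_2(\mathbf v)\cup E_3(\mathbf v)\big)$. If $t\geq 4$ is even, $D_{n,t}=\{1^{t-2}\alpha1:\alpha\in[n]\}\cup\bigcup_{\mathbf v\in D_{n,t-2}\setminus\{1^{t-2}\}}\big(E_1(\mathbf v)\cup E_2(\mathbf v)\cup E_3(\mathbf v)\big)$. (In this recursion $1^{t-2}\in D_{n,t-2}$ is the only constant word in $D_{n,t-2}$, so $E_3$ is applied only to non-constant words.) *)

theory Defs
  imports Main "HOL-Library.Extended_Nat"
begin

text \<open>Words in [n]^t are lists of length t over {1..n}; positions are 0-indexed.\<close>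

definition sverts :: "nat \<Rightarrow> nat \<Rightarrow> nat list set" where
  "sverts n t = {w. length w = t \<and> set w \<subseteq> {1..n}}"

definition sadj :: "nat \<Rightarrow> nat \<Rightarrow> nat list \<Rightarrow> nat list \<Rightarrow> bool" where
  "sadj n t u v \<longleftrightarrow> u \<in> sverts n t \<and> v \<in> sverts n t \<and>
     (\<exists>s<t. (\<forall>j<s. u!j = v!j) \<and> u!s \<noteq> v!s \<and>
        (\<forall>j. s < j \<and> j < t \<longrightarrow> u!j = v!s \<and> v!j = u!s))"

definition swalk :: "nat \<Rightarrow> nat \<Rightarrow> nat list list \<Rightarrow> bool" where
  "swalk n t p \<longleftrightarrow> p \<noteq> [] \<and> set p \<subseteq> sverts n t \<and>
     (\<forall>i. Suc i < length p \<longrightarrow> sadj n t (p!i) (p!Suc i))"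

definition sdist :: "nat \<Rightarrow> nat \<Rightarrow> nat list \<Rightarrow> nat list \<Rightarrow> enat" where
  "sdist n t u v = (INF p \<in> {p. swalk n t p \<and> hd p = u \<and> last p = v}. enat (length p - 1))"

definition E1 :: "nat \<Rightarrow> nat list \<Rightarrow> nat list set" where
  "E1 n v = {v @ [a, a] | a. a \<in> {1..n}}"

definition E2 :: "nat \<Rightarrow> nat list \<Rightarrow> nat list set" where
  "E2 n v = {butlast v @ [a, b, last v] | a b. a \<in> {1..n} - {last v} \<and> b \<in> {1..n} - {last v}}"

text \<open>0-indexed largest i with i+1 < length v and v!i \<noteq> v!(i+1)
  (this is \<open>\<ell> - 1\<close> for the paper's 1-indexed \<open>\<ell>\<close>).\<close>
definition lastdiff :: "nat list \<Rightarrow> nat" where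
  "lastdiff v = (GREATEST i. Suc i < length v \<and> v!i \<noteq> v!Suc i)"

definition E3 :: "nat \<Rightarrow> nat list \<Rightarrow> nat list set" where
  "E3 n v = (let i = lastdiff v in
     {take i v @ [v!Suc i] @ replicate (length v - i - 1) (v!i) @ [a, v!i] | a. a \<in> {1..n} - {v!i}})"

fun Dset :: "nat \<Rightarrow> nat \<Rightarrow> nat list set" where
  "Dset n 0 = {}"
| "Dset n (Suc 0) = {[1]}"
| "Dset n (Suc (Suc 0)) = {[a, 1] | a. a \<in> {1..n}}"
| "Dset n (Suc (Suc (Suc k))) =
     (let m = Suc k; one = replicate m 1;
          rest = (\<Union>v \<in> Dset n m - {one}. E1 n v \<union> E2 n v \<union> E3 n v) in
      if odd (Suc (Suc (Suc k))) then E1 n one \<union> E2 n one \<union> rest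
      else {one @ [a, 1] | a. a \<in> {1..n}} \<union> rest)"

end

theory Submission
  imports Defs
begin

definition adj0 :: "nat list \<Rightarrow> nat list \<Rightarrow> bool" where
  "adj0 u v \<longleftrightarrow> (\<exists>p a c k. a \<noteq> c \<and> u = p @ a # replicate k c \<and> v = p @ c # replicate k a)"

lemma adj0_sym: "adj0 u v \<Longrightarrow> adj0 v u"
  unfolding adj0_def by metis

lemma adj0_irrefl: "\<not> adj0 u u"
  unfolding adj0_def by auto

lemma adj0_length: "adj0 u v \<Longrightarrow> length u = length v"
  unfolding adj0_def by auto

lemma adj0_unique:
  assumes "a \<noteq> c" "a' \<noteq> c'" and e1: "p @ a # replicate k c = p' @ a' # replicate k' c'"
    and e2: "p @ c # replicate k a = p' @ c' # replicate k' a'"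
  shows "p = p' \<and> a = a' \<and> c = c' \<and> k = k'"
proof -
  have "length p = length p'"
  proof (rule ccontr)
    assume ne: "length p \<noteq> length p'"
    show False
    proof (cases "length p < length p'")
      case True
      have "(p @ a # replicate k c) ! length p = (p' @ a' # replicate k' c') ! length p" using e1 by simp
      hence "a = p' ! length p" using True by (simp add: nth_append)
      moreover have "(p @ c # replicate k a) ! length p = (p' @ c' # replicate k' a') ! length p" using e2 by simp
      hence "c = p' ! length p" using True by (simp add: nth_append)
      ultimately show False using assms(1) by simp
    next
      case False
      hence lt: "length p' < length p" using ne by simp
      have "(p @ a # replicate k c) ! length p' = (p' @ a' # replicate k' c') ! length p'" using e1 by simp
      hence "a' = p ! length p'" using lt by (simp add: nth_append)
      moreover have "(p @ c # replicate k a) ! length p' = (p' @ c' # replicate k' a') ! length p'" using e2 by simp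
      hence "c' = p ! length p'" using lt by (simp add: nth_append)
      ultimately show False using assms(2) by simp
    qed
  qed
  then have "p = p'" "a # replicate k c = a' # replicate k' c'" "c # replicate k a = c' # replicate k' a'"
    using e1 e2 by auto
  then show ?thesis by (metis length_replicate list.inject)
qed

lemma adj0_2: "adj0 [a,b] [x,y] \<longleftrightarrow> (a = x \<and> b \<noteq> y) \<or> (a \<noteq> b \<and> x = b \<and> y = a)"
proof
  assume "adj0 [a,b] [x,y]"
  then obtain p A C k where ne: "A \<noteq> C" and e1: "[a,b] = p @ A # replicate k C"
    and e2: "[x,y] = p @ C # replicate k A" unfolding adj0_def by blast
  show "(a = x \<and> b \<noteq> y) \<or> (a \<noteq> b \<and> x = b \<and> y = a)"
  proof (cases p)
    case Nil
    then show ?thesis using e1 e2 ne by (cases k) auto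
  next
    case (Cons q qs)
    then show ?thesis using e1 e2 ne by (cases qs; cases k) auto
  qed
next
  assume "(a = x \<and> b \<noteq> y) \<or> (a \<noteq> b \<and> x = b \<and> y = a)"
  then show "adj0 [a,b] [x,y]"
  proof
    assume h: "a = x \<and> b \<noteq> y"
    show ?thesis unfolding adj0_def
      by (rule exI[of _ "[a]"], rule exI[of _ b], rule exI[of _ y], rule exI[of _ 0]) (use h in auto)
  next
    assume h: "a \<noteq> b \<and> x = b \<and> y = a"
    show ?thesis unfolding adj0_def
      by (rule exI[of _ "[]"], rule exI[of _ a], rule exI[of _ b], rule exI[of _ 1]) (use h in auto)
  qed
qed

lemma adj0_split:
  assumes len: "length w1 = length w2" and ad: "adj0 (w1 @ [x1,y1]) (w2 @ [x2,y2])"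
  shows "(w1 = w2 \<and> adj0 [x1,y1] [x2,y2]) \<or>
    (\<exists>p A C k. A \<noteq> C \<and> w1 = p @ A # replicate k C \<and> w2 = p @ C # replicate k A
       \<and> x1 = C \<and> y1 = C \<and> x2 = A \<and> y2 = A)"
proof -
  obtain p A C k where ne: "A \<noteq> C" and e1: "w1 @ [x1,y1] = p @ A # replicate k C"
    and e2: "w2 @ [x2,y2] = p @ C # replicate k A" using ad unfolding adj0_def by blast
  show ?thesis
  proof (cases k)
    case 0
    have "(w1 @ [x1]) @ [y1] = p @ [A]" "(w2 @ [x2]) @ [y2] = p @ [C]" using e1 e2 0 by auto
    hence "w1 @ [x1] = p" "y1 = A" "w2 @ [x2] = p" "y2 = C" by (simp_all only: append1_eq_conv)
    hence "w1 = w2" "x1 = x2" using len by auto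
    then show ?thesis using \<open>y1 = A\<close> \<open>y2 = C\<close> ne by (simp add: adj0_2)
  next
    case (Suc j)
    show ?thesis
    proof (cases j)
      case 0
      have "w1 @ [x1,y1] = p @ [A, C]" "w2 @ [x2,y2] = p @ [C, A]" using e1 e2 Suc 0 by auto
      hence "w1 = p" "x1 = A" "y1 = C" "w2 = p" "x2 = C" "y2 = A" by auto
      then show ?thesis using ne by (simp add: adj0_2)
    next
      case (Suc i)
      have r: "replicate k X = replicate i X @ [X, X]" for X
        using \<open>k = Suc j\<close> Suc by (simp add: replicate_append_same[symmetric])
      have "w1 @ [x1,y1] = (p @ A # replicate i C) @ [C, C]"
           "w2 @ [x2,y2] = (p @ C # replicate i A) @ [A, A]" using e1 e2 r by auto
      hence "w1 = p @ A # replicate i C" "x1 = C" "y1 = C"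
            "w2 = p @ C # replicate i A" "x2 = A" "y2 = A" by auto
      then show ?thesis using ne by blast
    qed
  qed
qed

definition packing :: "nat list set \<Rightarrow> bool" where
  "packing S \<longleftrightarrow> (\<forall>u\<in>S. \<forall>v\<in>S. u \<noteq> v \<longrightarrow> \<not> adj0 u v \<and> \<not> (\<exists>w. adj0 u w \<and> adj0 w v))"

definition btyp :: "nat \<Rightarrow> nat list set \<Rightarrow> bool \<Rightarrow> nat list \<Rightarrow> nat \<Rightarrow> nat \<Rightarrow> bool" where
  "btyp m B ev w x y \<longleftrightarrow> (w \<in> B \<and> x = y) \<or>
     (\<exists>p A C k. p @ A # replicate k C \<in> B \<and> A \<noteq> C \<and> w = p @ C # replicate k A \<and> y = A \<and> x \<noteq> A) \<or>
     (ev \<and> w = replicate m 1 \<and> y = 1 \<and> x \<noteq> 1)"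

definition Tset :: "nat \<Rightarrow> nat list set \<Rightarrow> bool \<Rightarrow> nat list set" where
  "Tset m B ev = {w @ [x, y] | w x y. length w = m \<and> btyp m B ev w x y}"

lemma typN_adj: "A \<noteq> C \<Longrightarrow> adj0 (p @ A # replicate k C) (p @ C # replicate k A)"
  unfolding adj0_def by blast

locale hyp =
  fixes m :: nat and B :: "nat list set" and ev :: bool
  assumes pk: "packing B"
    and evh: "ev \<Longrightarrow> replicate m 1 \<notin> B \<and> (\<forall>v\<in>B. \<not> adj0 (replicate m 1) v)"
begin

lemma pk_eq: "v \<in> B \<Longrightarrow> v' \<in> B \<Longrightarrow> adj0 v w \<Longrightarrow> adj0 w v' \<Longrightarrow> v = v'"
  using pk unfolding packing_def by blast

lemma pk_adj: "v \<in> B \<Longrightarrow> w \<in> B \<Longrightarrow> adj0 v w \<Longrightarrow> False"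
proof -
  assume h: "v \<in> B" "w \<in> B" "adj0 v w"
  have "v \<noteq> w" using h(3) adj0_irrefl by metis
  then show False using pk h unfolding packing_def by blast
qed

lemma typ_E: "w \<in> B \<Longrightarrow> btyp m B ev w x y \<Longrightarrow> x = y"
  unfolding btyp_def using pk_adj typN_adj evh by metis

lemma typ_Z: "ev \<Longrightarrow> btyp m B ev (replicate m 1) x y \<Longrightarrow> y = 1 \<and> x \<noteq> 1"
  unfolding btyp_def using evh typN_adj adj0_sym by metis

lemma typ_N:
  assumes v: "p @ A # replicate k C \<in> B" "A \<noteq> C" and t: "btyp m B ev (p @ C # replicate k A) x y"
  shows "y = A \<and> x \<noteq> A"
proof -
  define w where "w = p @ C # replicate k A"
  have adjv: "adj0 (p @ A # replicate k C) w" using v typN_adj w_def by simp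
  from t consider (E') "w \<in> B \<and> x = y"
    | (N') p' A' C' k' where "p' @ A' # replicate k' C' \<in> B" "A' \<noteq> C'" "w = p' @ C' # replicate k' A'" "y = A'" "x \<noteq> A'"
    | (Z') "ev \<and> w = replicate m 1 \<and> y = 1 \<and> x \<noteq> 1" unfolding btyp_def w_def by blast
  then show ?thesis
  proof cases
    case E' then show ?thesis using pk_adj[OF v(1) _ adjv] by blast
  next
    case N'
    have "adj0 w (p' @ A' # replicate k' C')" using N' typN_adj adj0_sym by metis
    hence "p @ A # replicate k C = p' @ A' # replicate k' C'" using pk_eq[OF v(1) N'(1) adjv] by blast
    hence "A = A'" using adj0_unique[OF v(2) N'(2)] N'(3) w_def by metis
    then show ?thesis using N' by simp
  next
    case Z' then show ?thesis using evh v(1) adjv adj0_sym by blast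
  qed
qed

lemma Lb:
  assumes t1: "btyp m B ev w x1 y1" and t2: "btyp m B ev w x2 y2"
    and n1: "[x1,y1] = [a,b] \<or> adj0 [a,b] [x1,y1]"
    and n2: "[x2,y2] = [a,b] \<or> adj0 [a,b] [x2,y2]"
  shows "x1 = x2 \<and> y1 = y2"
proof -
  have lab: "x1 = x2 \<and> y1 = y2" if "y1 = L" "y2 = L" "x1 \<noteq> L" "x2 \<noteq> L" for L
    using n1 n2 that by (auto simp: adj0_2)
  have ext: "x1 = x2 \<and> y1 = y2" if "x1 = y1" "x2 = y2"
    using n1 n2 that by (auto simp: adj0_2)
  consider (E) "w \<in> B" | (N) p A C k where "p @ A # replicate k C \<in> B" "A \<noteq> C" "w = p @ C # replicate k A"
    | (Z) "ev" "w = replicate m 1" using t1 unfolding btyp_def by blast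
  then show ?thesis
  proof cases
    case E
    then show ?thesis using ext typ_E t1 t2 by blast
  next
    case N
    then show ?thesis using lab typ_N t1 t2 by metis
  next
    case Z
    then show ?thesis using lab typ_Z t1 t2 by metis
  qed
qed

lemma Lbb:
  assumes t1: "btyp m B ev w x1 y1" and w: "w = p @ A # replicate k C" and ne: "A \<noteq> C"
    and v: "p @ C # replicate k A \<in> B"
    and n1: "[x1,y1] = [C,C] \<or> adj0 [C,C] [x1,y1]"
  shows False
proof -
  have "y1 = C \<and> x1 \<noteq> C" using typ_N[OF v _ ] ne t1 w by metis
  then show False using n1 by (auto simp: adj0_2)
qed

lemma len2: "length x = Suc (Suc m') \<Longrightarrow> \<exists>w a b. x = w @ [a, b] \<and> length w = m'"
proof -
  assume h: "length x = Suc (Suc m')"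
  obtain x' b where "x = x' @ [b]" using h by (metis length_0_conv nat.distinct(1) rev_exhaust)
  moreover obtain w a where "x' = w @ [a]" using h calculation by (metis Suc_inject length_0_conv length_append_singleton nat.distinct(1) rev_exhaust)
  ultimately show ?thesis using h by auto
qed

lemma core:
  assumes u1: "u1 \<in> Tset m B ev" and u2: "u2 \<in> Tset m B ev"
    and a1: "u1 = x \<or> adj0 x u1" and a2: "u2 = x \<or> adj0 x u2"
  shows "u1 = u2"
proof -
  obtain w1 x1 y1 where U1: "u1 = w1 @ [x1,y1]" "length w1 = m" "btyp m B ev w1 x1 y1"
    using u1 unfolding Tset_def by blast
  obtain w2 x2 y2 where U2: "u2 = w2 @ [x2,y2]" "length w2 = m" "btyp m B ev w2 x2 y2"
    using u2 unfolding Tset_def by blast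
  have "length x = Suc (Suc m)" using a1 U1 adj0_length by fastforce
  then obtain w a b where X: "x = w @ [a,b]" "length w = m" using len2 by blast
  have cl: "(w' = w \<and> ([x',y'] = [a,b] \<or> adj0 [a,b] [x',y'])) \<or>
    (\<exists>p A C k. A \<noteq> C \<and> w = p @ A # replicate k C \<and> w' = p @ C # replicate k A
       \<and> a = C \<and> b = C \<and> x' = A \<and> y' = A)"
    if "w' @ [x',y'] = x \<or> adj0 x (w' @ [x',y'])" "length w' = m" for w' x' y'
    using that X adj0_split[of w w'] by auto
  have typ_ext: "w' \<in> B" if "btyp m B ev w' z z" for w' z
    using that unfolding btyp_def by auto
  have c1: "(w1 = w \<and> ([x1,y1] = [a,b] \<or> adj0 [a,b] [x1,y1])) \<or>
    (\<exists>p A C k. A \<noteq> C \<and> w = p @ A # replicate k C \<and> w1 = p @ C # replicate k A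
       \<and> a = C \<and> b = C \<and> x1 = A \<and> y1 = A)" using cl[OF _ U1(2)] a1 U1(1) by metis
  have c2: "(w2 = w \<and> ([x2,y2] = [a,b] \<or> adj0 [a,b] [x2,y2])) \<or>
    (\<exists>p A C k. A \<noteq> C \<and> w = p @ A # replicate k C \<and> w2 = p @ C # replicate k A
       \<and> a = C \<and> b = C \<and> x2 = A \<and> y2 = A)" using cl[OF _ U2(2)] a2 U2(1) by metis
  show ?thesis
  proof (cases "w1 = w \<and> ([x1,y1] = [a,b] \<or> adj0 [a,b] [x1,y1])")
    case T1: True
    show ?thesis
    proof (cases "w2 = w \<and> ([x2,y2] = [a,b] \<or> adj0 [a,b] [x2,y2])")
      case True
      then show ?thesis using T1 Lb U1 U2 by metis
    next
      case False
      then obtain p A C k where B2: "A \<noteq> C" "w = p @ A # replicate k C" "w2 = p @ C # replicate k A"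
         "a = C" "b = C" "x2 = A" "y2 = A" using c2 by blast
      have "w2 \<in> B" using typ_ext U2(3) B2 by simp
      then show ?thesis using Lbb[of w x1 y1 p A k C] T1 U1(3) B2 by simp
    qed
  next
    case F1: False
    then obtain p A C k where B1: "A \<noteq> C" "w = p @ A # replicate k C" "w1 = p @ C # replicate k A"
         "a = C" "b = C" "x1 = A" "y1 = A" using c1 by blast
    have w1B: "w1 \<in> B" using typ_ext U1(3) B1 by simp
    show ?thesis
    proof (cases "w2 = w \<and> ([x2,y2] = [a,b] \<or> adj0 [a,b] [x2,y2])")
      case True
      then show ?thesis using Lbb[of w x2 y2 p A k C] U2(3) B1 w1B by simp
    next
      case False
      then obtain p' A' C' k' where B2: "A' \<noteq> C'" "w = p' @ A' # replicate k' C'" "w2 = p' @ C' # replicate k' A'"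
         "a = C'" "b = C'" "x2 = A'" "y2 = A'" using c2 by blast
      have w2B: "w2 \<in> B" using typ_ext U2(3) B2 by simp
      have "adj0 w1 w" using B1 typN_adj adj0_sym by metis
      moreover have "adj0 w w2" using B2 typN_adj by metis
      ultimately have "w1 = w2" using pk_eq w1B w2B by blast
      hence "A = A'" using adj0_unique[OF B1(1) B2(1)] B1 B2 by metis
      then show ?thesis using B1 B2 U1 U2 \<open>w1 = w2\<close> by simp
    qed
  qed
qed

lemma packT: "packing (Tset m B ev)"
  unfolding packing_def
proof (intro ballI impI)
  fix u v assume u: "u \<in> Tset m B ev" and v: "v \<in> Tset m B ev" and ne: "u \<noteq> v"
  have 1: "\<not> adj0 u v"
  proof
    assume h: "adj0 u v"
    have "u = u \<or> adj0 u u" by simp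
    moreover have "v = u \<or> adj0 u v" using h by simp
    ultimately have "u = v" using core[OF u v] by blast
    then show False using ne by simp
  qed
  have 2: "\<not> (\<exists>w. adj0 u w \<and> adj0 w v)"
  proof
    assume "\<exists>w. adj0 u w \<and> adj0 w v"
    then obtain w where h: "adj0 u w" "adj0 w v" by blast
    have "u = w \<or> adj0 w u" using h adj0_sym by blast
    moreover have "v = w \<or> adj0 w v" using h by simp
    ultimately have "u = v" using core[OF u v] by blast
    then show False using ne by simp
  qed
  show "\<not> adj0 u v \<and> \<not> (\<exists>w. adj0 u w \<and> adj0 w v)" using 1 2 by simp
qed

lemma evT: "ev \<Longrightarrow> u \<in> Tset m B ev \<Longrightarrow> \<not> adj0 (replicate (Suc (Suc m)) 1) u"
proof
  assume e: ev and u: "u \<in> Tset m B ev" and ad: "adj0 (replicate (Suc (Suc m)) 1) u"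
  obtain w1 x1 y1 where U1: "u = w1 @ [x1,y1]" "length w1 = m" "btyp m B ev w1 x1 y1"
    using u unfolding Tset_def by blast
  have r: "replicate (Suc (Suc m)) (1::nat) = replicate m 1 @ [1,1]"
    by (induct m) auto
  have "(replicate m 1 = w1 \<and> adj0 [1,1] [x1,y1]) \<or>
    (\<exists>p A C k. A \<noteq> C \<and> replicate m 1 = p @ A # replicate k C \<and> w1 = p @ C # replicate k A
       \<and> 1 = C \<and> 1 = C \<and> x1 = A \<and> y1 = A)"
  proof -
    have "adj0 (replicate m 1 @ [1,1]) (w1 @ [x1,y1])" using ad r U1(1) by simp
    from adj0_split[OF _ this] show ?thesis using U1(2) by simp
  qed
  then show False
  proof
    assume h: "replicate m 1 = w1 \<and> adj0 [1,1] [x1,y1]"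
    then have "x1 = 1" by (simp add: adj0_2)
    then show False using typ_Z[OF e] h U1 by blast
  next
    assume "\<exists>p A C k. A \<noteq> C \<and> replicate m 1 = p @ A # replicate k C \<and> w1 = p @ C # replicate k A
       \<and> 1 = C \<and> 1 = C \<and> x1 = A \<and> y1 = A"
    moreover have "\<forall>p A C k. replicate m (1::nat) = p @ A # replicate k C \<longrightarrow> A = 1"
    proof (intro allI impI)
      fix p A C k assume "replicate m (1::nat) = p @ A # replicate k C"
      then have "A \<in> set (replicate m (1::nat))" by (metis in_set_conv_decomp)
      then show "A = 1" by (metis in_set_replicate)
    qed
    ultimately show False by metis
  qed
qed

end

definition nc :: "nat list \<Rightarrow> bool" where
  "nc v \<longleftrightarrow> (\<exists>i. Suc i < length v \<and> v ! i \<noteq> v ! Suc i)"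

lemma nc_app2: "x \<noteq> y \<Longrightarrow> nc (w @ [x, y])"
  unfolding nc_def by (rule exI[of _ "length w"]) (simp add: nth_append)

lemma nc_app: "nc v \<Longrightarrow> nc (v @ ys)"
proof -
  assume "nc v"
  then obtain i where i: "Suc i < length v" "v ! i \<noteq> v ! Suc i" unfolding nc_def by blast
  have "(v @ ys) ! i = v ! i" "(v @ ys) ! Suc i = v ! Suc i" using i(1) by (simp_all add: nth_append)
  then show "nc (v @ ys)" unfolding nc_def using i by (intro exI[of _ i]) simp
qed

lemma lastdiff_props:
  assumes "nc v"
  shows "Suc (lastdiff v) < length v \<and> v ! lastdiff v \<noteq> v ! Suc (lastdiff v) \<and>
    v = take (lastdiff v) v @ v ! lastdiff v # replicate (length v - lastdiff v - 1) (v ! Suc (lastdiff v))"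
proof -
  define P where "P i \<longleftrightarrow> Suc i < length v \<and> v ! i \<noteq> v ! Suc i" for i
  obtain k where k: "P k" using assms unfolding nc_def P_def by blast
  have bd: "\<And>y. P y \<Longrightarrow> y \<le> length v" unfolding P_def by simp
  define i where "i = lastdiff v"
  have iG: "i = Greatest P" unfolding i_def lastdiff_def P_def by simp
  have Pi: "P i" using GreatestI_nat[of P k, OF k bd] iG by simp
  have le: "\<And>y. P y \<Longrightarrow> y \<le> i" using Greatest_le_nat[of P _ "length v"] bd iG by blast
  have const: "\<forall>d. Suc i + d < length v \<longrightarrow> v ! (Suc i + d) = v ! Suc i"
  proof
    fix d show "Suc i + d < length v \<longrightarrow> v ! (Suc i + d) = v ! Suc i"
    proof (induct d)
      case 0 then show ?case by simp
    next
      case (Suc d)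
      show ?case
      proof
        assume h: "Suc i + Suc d < length v"
        have "\<not> P (Suc i + d)" using le by fastforce
        hence "v ! (Suc i + d) = v ! Suc (Suc i + d)" using h unfolding P_def by simp
        then show "v ! (Suc i + Suc d) = v ! Suc i" using Suc h by simp
      qed
    qed
  qed
  have eq: "v = take i v @ v ! i # replicate (length v - i - 1) (v ! Suc i)"
  proof (rule nth_equalityI)
    show "length v = length (take i v @ v ! i # replicate (length v - i - 1) (v ! Suc i))"
      using Pi unfolding P_def by auto
  next
    fix j assume j: "j < length v"
    show "v ! j = (take i v @ v ! i # replicate (length v - i - 1) (v ! Suc i)) ! j"
    proof (cases "j \<le> i")
      case True
      then show ?thesis using Pi unfolding P_def by (auto simp: nth_append nth_Cons' min_def)
    next
      case False
      then obtain d where "j = Suc i + d" by (metis add_Suc_right add_Suc_shift less_imp_Suc_add not_le)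
      then show ?thesis using const j Pi unfolding P_def by (auto simp: nth_append nth_Cons' min_def)
    qed
  qed
  show ?thesis using Pi eq unfolding P_def i_def by simp
qed

lemma E3_form:
  assumes "nc v" and "u \<in> E3 n v"
  shows "\<exists>p A C k a. A \<noteq> C \<and> v = p @ A # replicate k C \<and> u = (p @ C # replicate k A) @ [a, A] \<and> a \<noteq> A
     \<and> length (p @ C # replicate k A) = length v"
proof -
  define i where "i = lastdiff v"
  have L: "Suc i < length v" "v ! i \<noteq> v ! Suc i"
    "v = take i v @ v ! i # replicate (length v - i - 1) (v ! Suc i)"
    using lastdiff_props[OF assms(1)] unfolding i_def by auto
  obtain a where a: "a \<in> {1..n} - {v ! i}"
    "u = take i v @ [v ! Suc i] @ replicate (length v - i - 1) (v ! i) @ [a, v ! i]"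
    using assms(2) unfolding E3_def Let_def i_def by blast
  show ?thesis
    apply (rule exI[of _ "take i v"], rule exI[of _ "v ! i"], rule exI[of _ "v ! Suc i"],
           rule exI[of _ "length v - i - 1"], rule exI[of _ a])
    using L a by auto
qed

lemma Dset_step:
  "Dset n (Suc (Suc (Suc k))) =
     (if odd (Suc k) then E1 n (replicate (Suc k) 1) \<union> E2 n (replicate (Suc k) 1)
        \<union> (\<Union>v \<in> Dset n (Suc k) - {replicate (Suc k) 1}. E1 n v \<union> E2 n v \<union> E3 n v)
      else {replicate (Suc k) 1 @ [a, 1] | a. a \<in> {1..n}}
        \<union> (\<Union>v \<in> Dset n (Suc k) - {replicate (Suc k) 1}. E1 n v \<union> E2 n v \<union> E3 n v))"
  by (simp add: Let_def)

lemma rep_SS: "replicate (Suc (Suc m)) x = replicate m x @ [x, x]"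
  by (induct m) auto

lemma E1_len: "u \<in> E1 n v \<Longrightarrow> length u = length v + 2"
  unfolding E1_def by auto

lemma E2_len: "v \<noteq> [] \<Longrightarrow> u \<in> E2 n v \<Longrightarrow> length u = length v + 2"
  unfolding E2_def by auto

lemma E2_nc: "u \<in> E2 n v \<Longrightarrow> nc u"
proof -
  assume "u \<in> E2 n v"
  then obtain a b where "u = (butlast v @ [a]) @ [b, last v]" "b \<noteq> last v" unfolding E2_def by auto
  then show "nc u" using nc_app2 by metis
qed

lemma E1_nc: "nc v \<Longrightarrow> u \<in> E1 n v \<Longrightarrow> nc u"
  unfolding E1_def using nc_app by auto

lemma E3_len_nc: "nc v \<Longrightarrow> u \<in> E3 n v \<Longrightarrow> length u = length v + 2 \<and> nc u"
proof -
  assume a: "nc v" "u \<in> E3 n v"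
  from E3_form[OF a] obtain p A C k x where h: "u = (p @ C # replicate k A) @ [x, A]" "x \<noteq> A"
    "length (p @ C # replicate k A) = length v" by blast
  have "nc u" using h(1,2) nc_app2 by metis
  then show ?thesis using h by simp
qed

lemma E1_one_nc: "m \<ge> 1 \<Longrightarrow> u \<in> E1 n (replicate m 1) \<Longrightarrow> u \<noteq> replicate (Suc (Suc m)) 1 \<Longrightarrow> nc u"
proof -
  assume m: "m \<ge> 1" and u: "u \<in> E1 n (replicate m 1)" and ne: "u \<noteq> replicate (Suc (Suc m)) 1"
  obtain a where a: "u = replicate m 1 @ [a, a]" using u unfolding E1_def by auto
  have a1: "a \<noteq> 1" using a ne rep_SS by metis
  obtain j where "m = Suc j" using m by (metis Suc_le_D One_nat_def)
  hence "u = (replicate j 1 @ [1, a]) @ [a]" using a by (simp add: replicate_append_same[symmetric])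
  then show "nc u" using nc_app nc_app2 a1 by metis
qed

lemma Dinv:
  assumes n: "n \<ge> 1"
  shows "t \<ge> 1 \<Longrightarrow> replicate t 1 \<in> Dset n t \<and> (\<forall>v\<in>Dset n t. length v = t \<and> (v \<noteq> replicate t 1 \<longrightarrow> nc v))"
proof (induct t rule: less_induct)
  case (less t)
  consider (one) "t = 1" | (two) "t = 2" | (step) k where "t = Suc (Suc (Suc k))"
  proof (cases "t \<ge> 3")
    case True
    define k where "k = t - 3"
    have "t = Suc (Suc (Suc k))" using True k_def by simp
    then show ?thesis using that by blast
  next
    case False
    then have "t = 1 \<or> t = 2" using less.prems by linarith
    then show ?thesis using that by blast
  qed
  then show ?case
  proof cases
    case one then show ?thesis by simp
  next
    case two then show ?thesis using n by (auto simp: numeral_2_eq_2 nc_def)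
  next
    case step
    define m where "m = Suc k"
    have IH: "replicate m 1 \<in> Dset n m \<and> (\<forall>v\<in>Dset n m. length v = m \<and> (v \<noteq> replicate m 1 \<longrightarrow> nc v))"
      using less.hyps[of m] step m_def by simp
    have t: "t = Suc (Suc m)" using step m_def by simp
    have rest: "length u = t \<and> (u \<noteq> replicate t 1 \<longrightarrow> nc u)"
      if "v \<in> Dset n m" "v \<noteq> replicate m 1" "u \<in> E1 n v \<union> E2 n v \<union> E3 n v" for u v
    proof -
      have lv: "length v = m" "nc v" using IH that by auto
      have "v \<noteq> []" using lv m_def by auto
      have "length u = length v + 2 \<and> nc u"
        using that(3)
      proof (elim UnE)
        assume "u \<in> E1 n v" then show ?thesis using E1_len E1_nc lv by blast
      next
        assume "u \<in> E2 n v" then show ?thesis using E2_len E2_nc \<open>v \<noteq> []\<close> by blast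
      next
        assume "u \<in> E3 n v" then show ?thesis using E3_len_nc lv by blast
      qed
      then show ?thesis using lv t by simp
    qed
    show ?thesis
    proof (cases "odd m")
      case True
      have D: "Dset n t = E1 n (replicate m 1) \<union> E2 n (replicate m 1)
        \<union> (\<Union>v \<in> Dset n m - {replicate m 1}. E1 n v \<union> E2 n v \<union> E3 n v)"
        using Dset_step[of n k] True step m_def by simp
      have "replicate t 1 = replicate m 1 @ [1, 1]" using t rep_SS by simp
      moreover have "replicate m 1 @ [1, 1] \<in> E1 n (replicate m 1)" unfolding E1_def using n by auto
      ultimately have "replicate t 1 \<in> E1 n (replicate m 1)" by metis
      moreover have "length u = t \<and> (u \<noteq> replicate t 1 \<longrightarrow> nc u)"
        if "u \<in> E1 n (replicate m 1) \<union> E2 n (replicate m 1)" for u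
      proof -
        have "replicate m (1::nat) \<noteq> []" using m_def by simp
        have lr: "length (replicate m (1::nat)) = m" by simp
        from that show ?thesis
        proof (elim UnE)
          assume h: "u \<in> E1 n (replicate m 1)"
          show ?thesis using E1_len[OF h] E1_one_nc[of m u n] h t m_def lr by simp
        next
          assume h: "u \<in> E2 n (replicate m 1)"
          show ?thesis using E2_len[OF \<open>replicate m (1::nat) \<noteq> []\<close> h] E2_nc[OF h] t lr by simp
        qed
      qed
      ultimately show ?thesis using D rest by blast
    next
      case False
      have D: "Dset n t = {replicate m 1 @ [a, 1] | a. a \<in> {1..n}}
        \<union> (\<Union>v \<in> Dset n m - {replicate m 1}. E1 n v \<union> E2 n v \<union> E3 n v)"
        using Dset_step[of n k] False step m_def by simp
      have rt: "replicate t 1 = replicate m 1 @ [1, 1]" using t rep_SS by simp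
      have "replicate t 1 \<in> {replicate m 1 @ [a, 1] | a. a \<in> {1..n}}"
        unfolding rt by (rule CollectI, rule exI[of _ 1]) (use n in simp)
      moreover have "length u = t \<and> (u \<noteq> replicate t 1 \<longrightarrow> nc u)"
        if uin: "u \<in> {replicate m 1 @ [a, 1] | a. a \<in> {1..n}}" for u
      proof -
        obtain a where a: "u = replicate m 1 @ [a, 1]" using uin by blast
        have "length u = t" using a t by simp
        moreover have "u \<noteq> replicate t 1 \<longrightarrow> nc u"
        proof
          assume "u \<noteq> replicate t 1"
          hence "u \<noteq> replicate m 1 @ [1, 1]" unfolding rt .
          hence "a \<noteq> 1" using a by auto
          then show "nc u" using a nc_app2 by metis
        qed
        ultimately show ?thesis by blast
      qed
      ultimately show ?thesis using D rest by blast
    qed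
  qed
qed

lemma TsetI: "length w = m \<Longrightarrow> btyp m B ev w x y \<Longrightarrow> w @ [x, y] \<in> Tset m B ev"
  unfolding Tset_def by blast

lemma incl_E1: "v \<in> B \<Longrightarrow> length v = m \<Longrightarrow> E1 n v \<subseteq> Tset m B ev"
proof
  fix u assume "v \<in> B" "length v = m" "u \<in> E1 n v"
  then obtain a where "u = v @ [a, a]" unfolding E1_def by blast
  then show "u \<in> Tset m B ev" using TsetI[of v m B ev a a] \<open>v \<in> B\<close> \<open>length v = m\<close>
    unfolding btyp_def by blast
qed

lemma incl_E2: "v \<in> B \<Longrightarrow> length v = m \<Longrightarrow> v \<noteq> [] \<Longrightarrow> E2 n v \<subseteq> Tset m B ev"
proof
  fix u assume vB: "v \<in> B" and lv: "length v = m" and ne: "v \<noteq> []" and u: "u \<in> E2 n v"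
  then obtain a b where ab: "u = butlast v @ [a, b, last v]" "a \<noteq> last v" "b \<noteq> last v"
    unfolding E2_def by blast
  have v: "butlast v @ last v # replicate 0 a = v" using ne by simp
  have "btyp m B ev (butlast v @ a # replicate 0 (last v)) b (last v)"
    unfolding btyp_def using vB v ab by (intro disjI2 disjI1 exI[of _ "butlast v"] exI[of _ "last v"] exI[of _ a] exI[of _ 0]) auto
  moreover have "length (butlast v @ a # replicate 0 (last v)) = m" using lv ne by (cases v) auto
  ultimately have "(butlast v @ a # replicate 0 (last v)) @ [b, last v] \<in> Tset m B ev" by (rule TsetI[rotated])
  then show "u \<in> Tset m B ev" using ab by simp
qed

lemma incl_E3: "v \<in> B \<Longrightarrow> length v = m \<Longrightarrow> nc v \<Longrightarrow> E3 n v \<subseteq> Tset m B ev"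
proof
  fix u assume vB: "v \<in> B" and lv: "length v = m" and nv: "nc v" and u: "u \<in> E3 n v"
  from E3_form[OF nv u] obtain p A C k a where h: "A \<noteq> C" "v = p @ A # replicate k C"
    "u = (p @ C # replicate k A) @ [a, A]" "a \<noteq> A" "length (p @ C # replicate k A) = length v" by blast
  have "btyp m B ev (p @ C # replicate k A) a A"
    unfolding btyp_def using vB h by blast
  then show "u \<in> Tset m B ev" using TsetI h lv by metis
qed

lemma packing_mono: "S \<subseteq> T \<Longrightarrow> packing T \<Longrightarrow> packing S"
  unfolding packing_def by (meson subsetD)

lemma step_incl:
  assumes n: "n \<ge> 1" and m: "m = Suc k"
  shows "Dset n (Suc (Suc m)) - (if even m then {replicate (Suc (Suc m)) 1} else {})
     \<subseteq> Tset m (Dset n m - (if even m then {replicate m 1} else {})) (even m)"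
proof
  define B where "B = Dset n m - (if even m then {replicate m 1} else {})"
  define one where "one = replicate m (1::nat)"
  fix u assume u: "u \<in> Dset n (Suc (Suc m)) - (if even m then {replicate (Suc (Suc m)) 1} else {})"
  have inv: "one \<in> Dset n m" "\<forall>v\<in>Dset n m. length v = m \<and> (v \<noteq> one \<longrightarrow> nc v)"
    using Dinv[OF n, of m] m one_def by auto
  have lone: "length one = m" "one \<noteq> []" using one_def m by auto
  have R: "u \<in> Tset m B (even m)"
    if uR: "u \<in> (\<Union>v \<in> Dset n m - {one}. E1 n v \<union> E2 n v \<union> E3 n v)"
  proof -
    obtain v where v: "v \<in> Dset n m" "v \<noteq> one" "u \<in> E1 n v \<union> E2 n v \<union> E3 n v" using uR by blast
    have vB: "v \<in> B" using v B_def one_def by auto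
    have lv: "length v = m" "nc v" using inv v by auto
    have "v \<noteq> []" using lv m by auto
    with v(3) show ?thesis
    proof (elim UnE)
      assume "u \<in> E1 n v" then show ?thesis using incl_E1[OF vB lv(1)] by (rule subsetD[rotated])
    next
      assume "u \<in> E2 n v" then show ?thesis using incl_E2[OF vB lv(1) \<open>v \<noteq> []\<close>] by (rule subsetD[rotated])
    next
      assume "u \<in> E3 n v" then show ?thesis using incl_E3[OF vB lv] by (rule subsetD[rotated])
    qed
  qed
  have "u \<in> Tset m B (even m)"
  proof (cases "even m")
    case False
    have D: "Dset n (Suc (Suc m)) = E1 n one \<union> E2 n one
        \<union> (\<Union>v \<in> Dset n m - {one}. E1 n v \<union> E2 n v \<union> E3 n v)"
      using Dset_step[of n k] False m one_def by simp
    have oB: "one \<in> B" using inv False B_def by simp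
    have "u \<in> E1 n one \<union> E2 n one \<union> (\<Union>v \<in> Dset n m - {one}. E1 n v \<union> E2 n v \<union> E3 n v)"
      using DiffD1[OF u] unfolding D .
    then show ?thesis
    proof (elim UnE)
      assume "u \<in> E1 n one" then show ?thesis using incl_E1[OF oB lone(1)] by (rule subsetD[rotated])
    next
      assume "u \<in> E2 n one" then show ?thesis using incl_E2[OF oB lone] by (rule subsetD[rotated])
    next
      assume "u \<in> (\<Union>v \<in> Dset n m - {one}. E1 n v \<union> E2 n v \<union> E3 n v)" then show ?thesis by (rule R)
    qed
  next
    case True
    have D: "Dset n (Suc (Suc m)) = {one @ [a, 1] | a. a \<in> {1..n}}
        \<union> (\<Union>v \<in> Dset n m - {one}. E1 n v \<union> E2 n v \<union> E3 n v)"
      using Dset_step[of n k] True m one_def by simp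
    have rt: "replicate (Suc (Suc m)) 1 = one @ [1, 1]" using one_def rep_SS by simp
    have u': "u \<in> {one @ [a, 1] | a. a \<in> {1..n}} \<union> (\<Union>v \<in> Dset n m - {one}. E1 n v \<union> E2 n v \<union> E3 n v)"
      "u \<noteq> one @ [1, 1]" using DiffD1[OF u] unfolding D apply assumption
      using u True rt by auto
    show ?thesis
    proof (cases "u \<in> {one @ [a, 1] | a. a \<in> {1..n}}")
      case True
      then obtain a where a: "u = one @ [a, 1]" by blast
      have "a \<noteq> 1" using a u'(2) by auto
      hence "btyp m B (even m) one a 1" unfolding btyp_def one_def using \<open>even m\<close> by simp
      then show ?thesis using TsetI lone(1) a by metis
    next
      case False
      then show ?thesis using u'(1) R by auto
    qed
  qed
  then show "u \<in> Tset m (Dset n m - (if even m then {replicate m 1} else {})) (even m)"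
    unfolding B_def .
qed

lemma Qall:
  assumes n: "n \<ge> 1"
  shows "t \<ge> 1 \<Longrightarrow> packing (Dset n t - (if even t then {replicate t 1} else {})) \<and>
    (even t \<longrightarrow> (\<forall>u\<in>Dset n t - {replicate t 1}. \<not> adj0 (replicate t 1) u))"
proof (induct t rule: less_induct)
  case (less t)
  consider (one) "t = 1" | (two) "t = 2" | (step) k where "t = Suc (Suc (Suc k))"
  proof (cases "t \<ge> 3")
    case True
    define k where "k = t - 3"
    have "t = Suc (Suc (Suc k))" using True k_def by simp
    then show ?thesis using that by blast
  next
    case False
    then have "t = 1 \<or> t = 2" using less.prems by linarith
    then show ?thesis using that by blast
  qed
  then show ?case
  proof cases
    case one then show ?thesis by (simp add: packing_def)
  next
    case two
    have h: "hyp 0 {} True" unfolding hyp_def packing_def by simp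
    have D2: "Dset n 2 = {[a, 1] | a. a \<in> {1..n}}" by (simp add: numeral_2_eq_2)
    have sub: "Dset n 2 - {replicate 2 1} \<subseteq> Tset 0 {} True"
    proof
      fix u assume "u \<in> Dset n 2 - {replicate 2 1}"
      then obtain a where a: "u = [] @ [a, 1]" "a \<noteq> 1" using D2 by (auto simp: numeral_2_eq_2)
      have "btyp 0 {} True [] a 1" unfolding btyp_def using a by simp
      then show "u \<in> Tset 0 {} True" using TsetI[of "[]" 0] a by simp
    qed
    have "packing (Dset n 2 - {replicate 2 1})" using packing_mono[OF sub hyp.packT[OF h]] .
    moreover have "\<forall>u\<in>Dset n 2 - {replicate 2 1}. \<not> adj0 (replicate 2 1) u"
      using hyp.evT[OF h] sub by (auto simp: numeral_2_eq_2)
    ultimately show ?thesis using two by simp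
  next
    case step
    define m where "m = Suc k"
    define B where "B = Dset n m - (if even m then {replicate m 1} else {})"
    have t: "t = Suc (Suc m)" using step m_def by simp
    have IH: "packing B \<and> (even m \<longrightarrow> (\<forall>u\<in>Dset n m - {replicate m 1}. \<not> adj0 (replicate m 1) u))"
      using less.hyps[of m] t m_def B_def by simp
    have h: "hyp m B (even m)" unfolding hyp_def using IH B_def by auto
    have ee: "even t = even m" using t by simp
    have sub0: "Dset n t - (if even m then {replicate t 1} else {}) \<subseteq> Tset m B (even m)"
      using step_incl[OF n m_def] unfolding B_def t .
    have sub: "Dset n t - (if even t then {replicate t 1} else {}) \<subseteq> Tset m B (even m)"
      using sub0 unfolding ee .
    have "packing (Dset n t - (if even t then {replicate t 1} else {}))"
      using packing_mono[OF sub hyp.packT[OF h]] .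
    moreover have "even t \<longrightarrow> (\<forall>u\<in>Dset n t - {replicate t 1}. \<not> adj0 (replicate t 1) u)"
    proof
      assume et: "even t"
      then have em: "even m" using t by simp
      show "\<forall>u\<in>Dset n t - {replicate t 1}. \<not> adj0 (replicate t 1) u"
      proof
        fix u assume "u \<in> Dset n t - {replicate t 1}"
        hence "u \<in> Tset m B (even m)" using sub0 em by auto
        then show "\<not> adj0 (replicate t 1) u" using hyp.evT[OF h em] unfolding t by blast
      qed
    qed
    ultimately show ?thesis by blast
  qed
qed

lemma sadj_adj0: "sadj n t u v \<Longrightarrow> adj0 u v"
proof -
  assume "sadj n t u v"
  then obtain s where lu: "length u = t" and lv: "length v = t" and s: "s < t"
    and pre: "\<forall>j<s. u!j = v!j" and ne: "u!s \<noteq> v!s"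
    and post: "\<forall>j. s < j \<and> j < t \<longrightarrow> u!j = v!s \<and> v!j = u!s"
    unfolding sadj_def sverts_def by blast
  have lt: "length (take s u) = s" using lu s by simp
  have gen: "(take s u @ a # replicate (t - s - 1) c) ! i = (if i < s then u ! i else if i = s then a else c)"
    if "i < t" for i a c
  proof -
    have "(take s u @ a # replicate (t - s - 1) c) ! i =
      (if i < s then take s u ! i else (a # replicate (t - s - 1) c) ! (i - s))"
      using lt by (simp add: nth_append)
    also have "\<dots> = (if i < s then u ! i else if i = s then a else c)"
      using that s by (auto simp: nth_Cons')
    finally show ?thesis .
  qed
  have eu: "u = take s u @ u!s # replicate (t - s - 1) (v!s)"
  proof (rule nth_equalityI)
    show "length u = length (take s u @ u!s # replicate (t - s - 1) (v!s))" using lu s by simp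
    fix i assume i: "i < length u"
    have "s < i \<Longrightarrow> u ! i = v ! s" using post i lu by blast
    then show "u ! i = (take s u @ u!s # replicate (t - s - 1) (v!s)) ! i"
      using gen[of i] i lu by auto
  qed
  have ev: "v = take s u @ v!s # replicate (t - s - 1) (u!s)"
  proof (rule nth_equalityI)
    show "length v = length (take s u @ v!s # replicate (t - s - 1) (u!s))" using lu lv s by simp
    fix i assume i: "i < length v"
    have "s < i \<Longrightarrow> v ! i = u ! s" using post i lv by blast
    moreover have "i < s \<Longrightarrow> v ! i = u ! i" using pre by simp
    ultimately show "v ! i = (take s u @ v!s # replicate (t - s - 1) (u!s)) ! i"
      using gen[of i] i lv by auto
  qed
  show "adj0 u v" unfolding adj0_def using eu ev ne by blast
qed

lemma sdist_ge3:
  assumes ne: "u \<noteq> v" and n1: "\<not> adj0 u v" and n2: "\<not> (\<exists>w. adj0 u w \<and> adj0 w v)"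
  shows "3 \<le> sdist n t u v"
  unfolding sdist_def
proof (rule INF_greatest)
  fix p assume "p \<in> {p. swalk n t p \<and> hd p = u \<and> last p = v}"
  then have w: "p \<noteq> []" "\<forall>i. Suc i < length p \<longrightarrow> sadj n t (p!i) (p!Suc i)" "hd p = u" "last p = v"
    unfolding swalk_def by auto
  have "\<not> length p \<le> 3"
  proof
    assume l: "length p \<le> 3"
    consider (a) x where "p = [x]" | (b) x y where "p = [x, y]" | (c) x y z where "p = [x, y, z]"
      using w(1) l by (cases p; cases "tl p"; cases "tl (tl p)"; cases "tl (tl (tl p))") auto
    then show False
    proof cases
      case a then show False using w ne by simp
    next
      case b
      have "sadj n t x y" using w(2)[rule_format, of 0] b by simp
      then show False using sadj_adj0 n1 w b by simp
    next
      case c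
      have "sadj n t x y" using w(2)[rule_format, of 0] c by simp
      moreover have "sadj n t y z" using w(2)[rule_format, of 1] c by simp
      ultimately have "adj0 x y" "adj0 y z" using sadj_adj0 by blast+
      moreover have "x = u" "z = v" using w c by auto
      ultimately show False using n2 by blast
    qed
  qed
  then show "3 \<le> enat (length p - 1)" by simp
qed

theorem lemma2p5:
  fixes n t :: nat
  assumes "n \<ge> 2" and "t \<ge> 1"
  shows "(odd t \<longrightarrow> (\<forall>u \<in> Dset n t. \<forall>v \<in> Dset n t. u \<noteq> v \<longrightarrow> sdist n t u v \<ge> 3))
       \<and> (even t \<longrightarrow> (\<forall>u \<in> Dset n t - {replicate t 1}. \<forall>v \<in> Dset n t - {replicate t 1}.
              u \<noteq> v \<longrightarrow> sdist n t u v \<ge> 3))"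
proof -
  have n: "n \<ge> 1" using assms by simp
  have P: "packing (Dset n t - (if even t then {replicate t 1} else {}))"
    using Qall[OF n assms(2)] by blast
  have key: "sdist n t u v \<ge> 3" if "u \<in> Dset n t - (if even t then {replicate t 1} else {})"
    "v \<in> Dset n t - (if even t then {replicate t 1} else {})" "u \<noteq> v" for u v
    using P that sdist_ge3 unfolding packing_def by blast
  show ?thesis using key by auto
qed

end
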